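(* Let $X$ be a subshift with shift map $\sigma$ and let $\mu$ be a $\sigma$-invariant Borel probability measure on $X$. For $x \in X$ and $n\in\mathbb{N}$ let $P_n(x) = \{y\in X: y_i = x_i \text{ for } 0\le i<n\}$ and $R_n(x) = \inf\{k>0 : x_{[k,k+n)} = x_{[0,n)}\}$. Suppose that for $\mu$-a.e. $x \in X$ the quantity $\limsup_{n\to\infty} -\frac{1}{n^{\beta}}\log\mu(P_n(x))$, as a function of $\beta>0$, has critical value $c$. Then for $\mu$-a.e. $x\in X$ the critical value of $\limsup_{n\to\infty}\frac{1}{n^{\beta}}\log R_n(x)$ (as a function of $\beta>0$) is at most $c$; that is, $\limsup_{n\to\infty}\frac{1}{n^{\beta}}\log R_n(x) = 0$ for every $\beta>c$.
   Context: Critical value: for a family of quantities $F(\beta)\in[0,\infty]$ indexed by $\beta>0$, we say $F$ has critical value $c$ if $F(\beta) = \infty$ for all $0<\beta<c$ and $F(\beta) = 0$ for all $\beta > c$. *)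

theory Defs
  imports "HOL-Probability.Probability"
begin

text \<open>One-sided subshifts over a finite alphabet of natural numbers.
  The space of sequences nat \<Rightarrow> nat carries the product topology
  (nat is discrete), so its Borel sets are the usual ones.\<close>

definition shift :: "(nat \<Rightarrow> nat) \<Rightarrow> (nat \<Rightarrow> nat)" where
  "shift x = (\<lambda>i. x (Suc i))"

definition subshift :: "(nat \<Rightarrow> nat) set \<Rightarrow> bool" where
  "subshift X \<longleftrightarrow> X \<noteq> {} \<and> closed X \<and> shift ` X \<subseteq> X \<and>
     (\<exists>A. finite A \<and> (\<forall>x\<in>X. \<forall>i. x i \<in> A))"

definition cyl :: "(nat \<Rightarrow> nat) set \<Rightarrow> nat \<Rightarrow> (nat \<Rightarrow> nat) \<Rightarrow> (nat \<Rightarrow> nat) set" where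
  "cyl X n x = {y \<in> X. \<forall>i<n. y i = x i}"

text \<open>Return time R_n(x) (infimum of the empty set is \<infinity>).\<close>
definition return_time :: "nat \<Rightarrow> (nat \<Rightarrow> nat) \<Rightarrow> ereal" where
  "return_time n x = Inf {ereal (real k) | k. k > 0 \<and> (\<forall>i<n. x (k + i) = x i)}"

definition meas_rate :: "(nat \<Rightarrow> nat) measure \<Rightarrow> (nat \<Rightarrow> nat) set \<Rightarrow> real \<Rightarrow> (nat \<Rightarrow> nat) \<Rightarrow> nat \<Rightarrow> ereal" where
  "meas_rate M X \<beta> x n =
     (if measure M (cyl X n x) = 0 then \<infinity>
      else ereal (- ln (measure M (cyl X n x)) / (real n powr \<beta>)))"

definition return_rate :: "real \<Rightarrow> (nat \<Rightarrow> nat) \<Rightarrow> nat \<Rightarrow> ereal" where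
  "return_rate \<beta> x n =
     (if return_time n x = \<infinity> then \<infinity>
      else ereal (ln (real_of_ereal (return_time n x)) / (real n powr \<beta>)))"

definition has_critical_value :: "(real \<Rightarrow> ereal) \<Rightarrow> real \<Rightarrow> bool" where
  "has_critical_value F c \<longleftrightarrow>
     (\<forall>\<beta>. 0 < \<beta> \<and> \<beta> < c \<longrightarrow> F \<beta> = \<infinity>) \<and> (\<forall>\<beta>. 0 < \<beta> \<and> \<beta> > c \<longrightarrow> F \<beta> = 0)"

end

theory Submission imports Defs "HOL-Real_Asymp.Real_Asymp" begin

lemma funpow_shift: "(shift ^^ k) x = (\<lambda>i. x (k + i))"
  by (induction k arbitrary: x) (auto simp: shift_def)

lemma coord_meas: "(\<lambda>y::nat\<Rightarrow>nat. y i) \<in> borel_measurable borel"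
  by (intro borel_measurable_continuous_onI continuous_on_product_coordinates)

lemma coord_set: "{y::nat\<Rightarrow>nat. y i = a} \<in> sets borel"
proof -
  have "{y::nat\<Rightarrow>nat. y i = a} = (\<lambda>y. y i) -` {a} \<inter> space borel" by auto
  also have "\<dots> \<in> sets borel" by (rule measurable_sets[OF coord_meas]) auto
  finally show ?thesis .
qed

lemma space_M: assumes "sets M = sets (restrict_space borel X)" shows "space M = X"
  using sets_eq_imp_space_eq[OF assms] by (simp add: space_restrict_space)

lemma cyl_sets: assumes "sets M = sets (restrict_space borel X)" shows "cyl X n x \<in> sets M"
proof -
  have "cyl X n x = X \<inter> (\<Inter>i\<in>{..<n}. {y. y i = x i})" by (auto simp: cyl_def)
  moreover have "(\<Inter>i\<in>{..<n}. {y. y i = x i}) \<in> sets borel"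
    using coord_set by (cases "n = 0") (auto intro!: sets.finite_INT)
  ultimately show ?thesis unfolding assms sets_restrict_space by blast
qed

lemma distr_funpow:
  assumes "shift \<in> M \<rightarrow>\<^sub>M M" "distr M M shift = M"
  shows "distr M M (shift ^^ k) = M"
proof (induction k)
  case 0 show ?case by (simp add: distr_id2)
next
  case (Suc k)
  have "distr M M (shift ^^ Suc k) = distr M M ((shift ^^ k) \<circ> shift)"
    by (simp only: funpow_Suc_right)
  also have "\<dots> = distr (distr M M shift) M (shift ^^ k)"
    by (rule distr_distr[symmetric]) (auto intro: measurable_compose_n assms)
  also have "\<dots> = M" using Suc assms by simp
  finally show ?case .
qed

lemma preimage_measure:
  assumes "shift \<in> M \<rightarrow>\<^sub>M M" "distr M M shift = M" "S \<in> sets M"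
  shows "(shift ^^ k) -` S \<inter> space M \<in> sets M"
    "measure M ((shift ^^ k) -` S \<inter> space M) = measure M S"
proof -
  have m: "(shift ^^ k) \<in> M \<rightarrow>\<^sub>M M" by (rule measurable_compose_n[OF assms(1)])
  show "(shift ^^ k) -` S \<inter> space M \<in> sets M" using measurable_sets[OF m assms(3)] .
  show "measure M ((shift ^^ k) -` S \<inter> space M) = measure M S"
    using measure_distr[OF m assms(3)] distr_funpow[OF assms(1,2)] by simp
qed

lemma funpow_diff: "i \<le> j \<Longrightarrow> (f ^^ j) y = (f ^^ (j - i)) ((f ^^ i) y)"
  by (metis funpow_add le_add_diff_inverse2 o_apply)

lemma key_bound:
  fixes m :: nat and M :: "(nat \<Rightarrow> nat) measure"
  assumes P: "prob_space M" and sh: "shift \<in> M \<rightarrow>\<^sub>M M" "distr M M shift = M" and C: "C \<in> sets M"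
  shows "C \<inter> (\<Inter>k\<in>{1..m}. (shift^^k) -` (space M - C) \<inter> space M) \<in> sets M"
    "(real m + 1) * measure M (C \<inter> (\<Inter>k\<in>{1..m}. (shift^^k) -` (space M - C) \<inter> space M)) \<le> 1"
proof -
  define A where "A = C \<inter> (\<Inter>k\<in>{1..m}. (shift^^k) -` (space M - C) \<inter> space M)"
  have pk: "(shift^^k) -` (space M - C) \<inter> space M \<in> sets M" for k
    using C by (intro preimage_measure(1)[OF sh]) auto
  have Am: "A \<in> sets M"
  proof (cases "m = 0")
    case True thus ?thesis unfolding A_def using C by simp
  next
    case False
    hence "(\<Inter>k\<in>{1..m}. (shift^^k) -` (space M - C) \<inter> space M) \<in> sets M"
      using pk by (intro sets.finite_INT) auto
    thus ?thesis unfolding A_def using C by blast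
  qed
  show "C \<inter> (\<Inter>k\<in>{1..m}. (shift^^k) -` (space M - C) \<inter> space M) \<in> sets M" using Am by (simp only: A_def)
  define D where "D j = (shift ^^ j) -` A \<inter> space M" for j
  have Dm: "D j \<in> sets M" for j unfolding D_def by (rule preimage_measure(1)[OF sh Am])
  have Dmu: "measure M (D j) = measure M A" for j unfolding D_def by (rule preimage_measure(2)[OF sh Am])
  have disj0: "D i \<inter> D j = {}" if "i < j" "j \<le> m" for i j
  proof (rule ccontr)
    assume "D i \<inter> D j \<noteq> {}"
    then obtain y where y: "y \<in> D i" "y \<in> D j" by blast
    define z where "z = (shift ^^ i) y"
    have zA: "z \<in> A" using y unfolding D_def z_def by auto
    have e: "(shift ^^ j) y = (shift ^^ (j - i)) z" unfolding z_def using funpow_diff[of i j] that by simp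
    have "(shift ^^ j) y \<in> A" using y unfolding D_def by auto
    hence "(shift ^^ (j - i)) z \<in> C" using e unfolding A_def by auto
    moreover have "j - i \<in> {1..m}"
    proof -
      show ?thesis using that by auto
    qed
    ultimately show False using zA unfolding A_def by auto
  qed
  have disj: "disjoint_family_on D {0..m}"
    unfolding disjoint_family_on_def
  proof (intro ballI impI)
    fix i j assume "i \<in> {0..m}" "j \<in> {0..m}" "i \<noteq> j"
    thus "D i \<inter> D j = {}" using disj0[of i j] disj0[of j i] by (cases "i < j") auto
  qed
  have "measure M (\<Union>j\<in>{0..m}. D j) = (\<Sum>j\<in>{0..m}. measure M (D j))"
    using disj Dm by (intro finite_measure.finite_measure_finite_Union[OF prob_space.finite_measure[OF P]]) auto
  also have "\<dots> = (real m + 1) * measure M A" using Dmu by simp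
  finally have "(real m + 1) * measure M A = measure M (\<Union>j\<in>{0..m}. D j)" by simp
  also have "\<dots> \<le> 1" using prob_space.prob_le_1[OF P] by simp
  finally have fin: "(real m + 1) * measure M A \<le> 1" .
  show "(real m + 1) * measure M (C \<inter> (\<Inter>k\<in>{1..m}. (shift^^k) -` (space M - C) \<inter> space M)) \<le> 1"
    using fin by (simp only: A_def)
qed

lemma aux_INT: "x \<in> C \<Longrightarrow> x \<notin> C \<inter> (\<Inter>k\<in>K. S k) \<Longrightarrow> \<exists>k\<in>K. x \<notin> S k"
  by blast

lemma cyl_same: "y \<in> cyl X n x \<Longrightarrow> cyl X n y = cyl X n x"
  unfolding cyl_def by (rule Collect_cong) auto

context
  fixes X :: "(nat \<Rightarrow> nat) set" and M :: "(nat \<Rightarrow> nat) measure"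
  assumes ss: "subshift X" and P: "prob_space M"
    and sM: "sets M = sets (restrict_space borel X)"
    and sh: "shift \<in> M \<rightarrow>\<^sub>M M" "distr M M shift = M"
begin

definition Cs :: "nat \<Rightarrow> (nat \<Rightarrow> nat) set set" where
  "Cs n = (\<lambda>x. cyl X n x) ` X"

definition mC :: "nat \<Rightarrow> (nat \<Rightarrow> nat) set \<Rightarrow> nat" where
  "mC n C = nat \<lfloor>real n ^ 2 / measure M C\<rfloor>"

definition AC :: "nat \<Rightarrow> (nat \<Rightarrow> nat) set \<Rightarrow> (nat \<Rightarrow> nat) set" where
  "AC n C = (if measure M C > 0 then C \<inter> (\<Inter>k\<in>{1..mC n C}. (shift^^k) -` (space M - C) \<inter> space M) else {})"

definition Bs :: "nat \<Rightarrow> (nat \<Rightarrow> nat) set" where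
  "Bs n = (\<Union>C\<in>Cs n. AC n C)"

lemma spM: "space M = X" by (rule space_M[OF sM])

lemma Cs_finite: "finite (Cs n)"
proof -
  obtain A where A: "finite A" "\<forall>x\<in>X. \<forall>i. x i \<in> A" using ss unfolding subshift_def by blast
  have "Cs n \<subseteq> (\<lambda>l. {y\<in>X. map y [0..<n] = l}) ` {l. set l \<subseteq> A \<and> length l = n}"
  proof
    fix C assume "C \<in> Cs n"
    then obtain x where x: "x \<in> X" "C = cyl X n x" unfolding Cs_def by (rule imageE)
    have "C = {y\<in>X. map y [0..<n] = map x [0..<n]}" unfolding x cyl_def
      by (simp add: map_eq_conv atLeast0LessThan lessThan_iff Ball_def)
    moreover have "map x [0..<n] \<in> {l. set l \<subseteq> A \<and> length l = n}" using A x by auto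
    ultimately show "C \<in> (\<lambda>l. {y\<in>X. map y [0..<n] = l}) ` {l. set l \<subseteq> A \<and> length l = n}"
      by (rule image_eqI)
  qed
  moreover have "finite {l. set l \<subseteq> A \<and> length l = n}" using finite_lists_length_eq[OF A(1)] .
  ultimately show ?thesis by (rule finite_subset[OF _ finite_imageI])
qed

lemma Cs_sets: "C \<in> Cs n \<Longrightarrow> C \<in> sets M"
  unfolding Cs_def using cyl_sets[OF sM] by blast

lemma Cs_disj: "disjoint_family_on (\<lambda>C. C) (Cs n)"
proof (unfold disjoint_family_on_def, intro ballI impI)
  fix C C' assume CC: "C \<in> Cs n" "C' \<in> Cs n" "C \<noteq> C'"
  then obtain x x' where xx: "C = cyl X n x" "C' = cyl X n x'" unfolding Cs_def by blast
  show "C \<inter> C' = {}"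
  proof (rule ccontr)
    assume "C \<inter> C' \<noteq> {}"
    then obtain y where y: "y \<in> C" "y \<in> C'" by blast
    have a: "cyl X n y = C" using y(1) unfolding xx by (rule cyl_same)
    have b: "cyl X n y = C'" using y(2) unfolding xx by (rule cyl_same)
    show False using a b CC(3) by (simp only:) 
  qed
qed

lemma AC_sets: assumes "C \<in> Cs n" shows "AC n C \<in> sets M"
proof -
  have "C \<inter> (\<Inter>k\<in>{1..mC n C}. (shift^^k) -` (space M - C) \<inter> space M) \<in> sets M"
    by (rule key_bound(1)[OF P sh Cs_sets[OF assms]])
  thus ?thesis unfolding AC_def by simp
qed

lemma Bs_sets: "Bs n \<in> sets M"
  unfolding Bs_def using AC_sets Cs_finite by (intro sets.finite_UN) blast+

lemma AC_bound: assumes "C \<in> Cs n" "n \<ge> 1" shows "measure M (AC n C) \<le> measure M C / real n ^ 2"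
proof (cases "measure M C > 0")
  case False thus ?thesis unfolding AC_def by simp
next
  case True
  let ?A = "C \<inter> (\<Inter>k\<in>{1..mC n C}. (shift^^k) -` (space M - C) \<inter> space M)"
  have b: "(real (mC n C) + 1) * measure M ?A \<le> 1" by (rule key_bound(2)[OF P sh Cs_sets[OF assms(1)]])
  have t: "real n ^ 2 / measure M C \<le> real (mC n C) + 1" unfolding mC_def
    using True by linarith
  have pos: "real n ^ 2 / measure M C > 0" using True assms(2) by simp
  have "measure M ?A * (real n ^ 2 / measure M C) \<le> measure M ?A * (real (mC n C) + 1)"
    using t by (intro mult_left_mono) auto
  also have "\<dots> \<le> 1" using b by (simp add: mult.commute)
  finally have "measure M ?A * (real n ^ 2 / measure M C) \<le> 1" .
  hence "measure M ?A \<le> measure M C / real n ^ 2" using True assms(2)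
    by (simp add: field_simps)
  thus ?thesis unfolding AC_def using True by simp
qed

lemma Bs_bound: assumes "n \<ge> 1" shows "measure M (Bs n) \<le> 1 / real n ^ 2"
proof -
  have "measure M (Bs n) \<le> (\<Sum>C\<in>Cs n. measure M (AC n C))" unfolding Bs_def
    using AC_sets Cs_finite by (intro finite_measure.finite_measure_subadditive_finite[OF prob_space.finite_measure[OF P]]) auto
  also have "\<dots> \<le> (\<Sum>C\<in>Cs n. measure M C / real n ^ 2)" using AC_bound assms by (intro sum_mono) auto
  also have "\<dots> = (\<Sum>C\<in>Cs n. measure M C) / real n ^ 2" by (simp add: sum_divide_distrib)
  also have "(\<Sum>C\<in>Cs n. measure M C) = measure M (\<Union>C\<in>Cs n. C)"
    using Cs_finite Cs_sets Cs_disj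
    by (intro finite_measure.finite_measure_finite_Union[OF prob_space.finite_measure[OF P], symmetric]) auto
  also have "\<dots> \<le> 1" using prob_space.prob_le_1[OF P] by simp
  finally show ?thesis by (simp add: divide_right_mono)
qed

lemma Bs_point:
  assumes "x \<in> X" "measure M (cyl X n x) > 0" "x \<notin> Bs n"
  shows "\<exists>k>0. real k \<le> real n ^ 2 / measure M (cyl X n x) \<and> (\<forall>i<n. x (k + i) = x i)"
proof -
  let ?C = "cyl X n x"
  have C: "?C \<in> Cs n" using assms(1) unfolding Cs_def by blast
  have xC: "x \<in> ?C" using assms(1) by (simp add: cyl_def)
  have "x \<notin> AC n ?C" using assms(3) C unfolding Bs_def by blast
  moreover have "AC n ?C = ?C \<inter> (\<Inter>k\<in>{1..mC n ?C}. (shift^^k) -` (space M - ?C) \<inter> space M)"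
    unfolding AC_def using assms(2) by (rule if_P)
  ultimately have "x \<notin> ?C \<inter> (\<Inter>k\<in>{1..mC n ?C}. (shift^^k) -` (space M - ?C) \<inter> space M)"
    by (simp only: not_False_eq_True)
  hence "\<exists>k\<in>{1..mC n ?C}. x \<notin> (shift^^k) -` (space M - ?C) \<inter> space M" by (rule aux_INT[OF xC])
  then obtain k where k: "k \<in> {1..mC n ?C}" "x \<notin> (shift^^k) -` (space M - ?C) \<inter> space M"
    by (rule bexE)
  have xM: "x \<in> space M" using assms(1) spM by simp
  have inX: "(shift^^k) x \<in> space M"
    by (rule measurable_space[OF measurable_compose_n[OF sh(1)] xM])
  have "(shift^^k) x \<in> ?C"
  proof (rule ccontr)
    assume "(shift^^k) x \<notin> ?C"
    with inX have "(shift^^k) x \<in> space M - ?C" by (rule DiffI)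
    hence "x \<in> (shift^^k) -` (space M - ?C)" unfolding vimage_eq .
    hence "x \<in> (shift^^k) -` (space M - ?C) \<inter> space M" using xM by (rule IntI)
    thus False using k(2) by (rule notE[rotated])
  qed
  hence "\<forall>i<n. (shift^^k) x i = x i" unfolding cyl_def by blast
  hence ret: "\<forall>i<n. x (k + i) = x i" unfolding funpow_shift .
  have "real k \<le> real (mC n ?C)" using k by simp
  also have "\<dots> \<le> real n ^ 2 / measure M (cyl X n x)" unfolding mC_def
    by (rule of_nat_floor) (use assms(2) in simp)
  finally have kb: "real k \<le> real n ^ 2 / measure M (cyl X n x)" .
  have k0: "k > 0" using k(1) by simp
  show ?thesis using k0 kb ret by blast
qed

lemma AE_Bs: "AE x in M. eventually (\<lambda>n. x \<in> space M - Bs n) sequentially"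
proof (rule borel_cantelli_AE1)
  show "Bs n \<in> sets M" for n by (rule Bs_sets)
  show "emeasure M (Bs n) < \<infinity>" for n
    using finite_measure.emeasure_finite[OF prob_space.finite_measure[OF P]] by (simp add: top.not_eq_extremum)
  show "summable (\<lambda>n. measure M (Bs n))"
  proof (rule summable_comparison_test')
    show "summable (\<lambda>n. inverse (real n ^ 2))" by (rule inverse_power_summable) simp
    show "norm (measure M (Bs n)) \<le> inverse (real n ^ 2)" if "n \<ge> 1" for n
      using Bs_bound[OF that] by (simp add: inverse_eq_divide)
  qed
qed

end


lemma rr_bound:
  fixes x :: "nat \<Rightarrow> nat" and \<mu> \<beta> :: real
  assumes n: "n \<ge> 2" and b: "\<beta> > 0" and mu: "\<mu> > 0" and k: "k > 0" "real k \<le> real n ^ 2 / \<mu>"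
    and ret: "\<forall>i<n. x (k + i) = x i"
  shows "return_rate \<beta> x n \<le> ereal (2 * ln (real n) / real n powr \<beta> + (- ln \<mu> / real n powr \<beta>))"
    "0 \<le> return_rate \<beta> x n"
proof -
  let ?S = "{ereal (real k) | k. k > 0 \<and> (\<forall>i<n. x (k + i) = x i)}"
  have up: "return_time n x \<le> ereal (real k)" unfolding return_time_def
    by (rule Inf_lower) (use k ret in blast)
  have lo: "1 \<le> return_time n x" unfolding return_time_def
    by (rule Inf_greatest) auto
  obtain r where r: "return_time n x = ereal r" using up lo
    by (cases "return_time n x") auto
  have r1: "1 \<le> r" "r \<le> real k" using up lo r by auto
  have rr: "return_rate \<beta> x n = ereal (ln r / real n powr \<beta>)"
    unfolding return_rate_def using r by simp
  have np: "real n powr \<beta> > 0" using n by simp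
  have "ln r \<le> ln (real n ^ 2 / \<mu>)" using r1 k(2) mu by (subst ln_le_cancel_iff) auto
  also have "\<dots> = 2 * ln (real n) - ln \<mu>" using n mu by (simp add: ln_div ln_realpow)
  finally have "ln r / real n powr \<beta> \<le> (2 * ln (real n) - ln \<mu>) / real n powr \<beta>"
    using np by (simp add: divide_right_mono)
  thus "return_rate \<beta> x n \<le> ereal (2 * ln (real n) / real n powr \<beta> + (- ln \<mu> / real n powr \<beta>))"
    unfolding rr by (simp add: diff_divide_distrib)
  show "0 \<le> return_rate \<beta> x n" unfolding rr using r1 np by simp
qed

theorem lemma4p6:
  fixes X :: "(nat \<Rightarrow> nat) set" and M :: "(nat \<Rightarrow> nat) measure" and c :: real
  assumes "subshift X"
    and "prob_space M"
    and "sets M = sets (restrict_space borel X)"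
    and "shift \<in> M \<rightarrow>\<^sub>M M"
    and "distr M M shift = M"
    and "AE x in M. has_critical_value (\<lambda>\<beta>. limsup (meas_rate M X \<beta> x)) c"
  shows "AE x in M. \<forall>\<beta>. 0 < \<beta> \<and> \<beta> > c \<longrightarrow> limsup (return_rate \<beta> x) = 0"
  using AE_Bs[OF assms(1-5)] assms(6) AE_space
proof eventually_elim
  case (elim x)
  have xX: "x \<in> X" using elim(3) space_M[OF assms(3)] by simp
  show ?case
  proof (intro allI impI)
    fix \<beta> :: real assume bc: "0 < \<beta> \<and> \<beta> > c"
    hence b: "\<beta> > 0" by simp
    have lim0: "limsup (meas_rate M X \<beta> x) = 0" using elim(2) bc unfolding has_critical_value_def by blast
    let ?mu = "\<lambda>n. measure M (cyl X n x)"
    have evpos: "eventually (\<lambda>n. ?mu n > 0) sequentially"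
    proof -
      have "eventually (\<lambda>n. meas_rate M X \<beta> x n < 1) sequentially"
        by (rule Limsup_lessD) (simp add: lim0)
      thus ?thesis
      proof (rule eventually_mono)
        fix n assume "meas_rate M X \<beta> x n < 1"
        hence "?mu n \<noteq> 0" unfolding meas_rate_def by auto
        thus "?mu n > 0" using measure_nonneg[of M "cyl X n x"] by linarith
      qed
    qed
    have ub: "limsup (return_rate \<beta> x) \<le> 0 + ereal e" if e: "e > 0" for e
    proof -
      have e1: "eventually (\<lambda>n. meas_rate M X \<beta> x n < ereal (e/2)) sequentially"
        by (rule Limsup_lessD) (simp add: lim0 e)
      have tl: "((\<lambda>n::nat. 2 * ln (real n) / real n powr \<beta>) \<longlongrightarrow> 0) sequentially"
        using b by real_asymp
      have e2: "eventually (\<lambda>n. 2 * ln (real n) / real n powr \<beta> < e/2) sequentially"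
        using order_tendstoD(2)[OF tl, of "e/2"] e by simp
      have "eventually (\<lambda>n. return_rate \<beta> x n \<le> ereal e) sequentially"
        using e1 e2 evpos elim(1) eventually_ge_at_top[of "2::nat"]
      proof eventually_elim
        case (elim n)
        have mpos: "?mu n > 0" and nB: "x \<notin> Bs X M n" and n2: "n \<ge> 2" using elim by auto
        obtain k where k: "k > 0" "real k \<le> real n ^ 2 / ?mu n" "\<forall>i<n. x (k + i) = x i"
          using Bs_point[OF assms(1-5) xX mpos nB] by blast
        have mr: "meas_rate M X \<beta> x n = ereal (- ln (?mu n) / real n powr \<beta>)"
          unfolding meas_rate_def using mpos by simp
        have a1: "- ln (?mu n) / real n powr \<beta> < e/2" using elim(1) mr by simp
        have a2: "2 * ln (real n) / real n powr \<beta> < e/2" using elim(2) by simp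
        have "2 * ln (real n) / real n powr \<beta> + (- ln (?mu n) / real n powr \<beta>) \<le> e" using a1 a2 by linarith
        thus ?case using rr_bound(1)[OF n2 b mpos k] order_trans by fastforce
      qed
      hence "limsup (return_rate \<beta> x) \<le> ereal e" by (rule Limsup_bounded)
      thus ?thesis by simp
    qed
    have "limsup (return_rate \<beta> x) \<le> 0" by (rule ereal_le_epsilon2) (use ub in blast)
    moreover have "0 \<le> limsup (return_rate \<beta> x)"
    proof (rule le_Limsup)
      show "sequentially \<noteq> bot" by simp
      show "eventually (\<lambda>n. 0 \<le> return_rate \<beta> x n) sequentially"
        using evpos elim(1) eventually_ge_at_top[of "2::nat"]
      proof eventually_elim
        case (elim n)
        have mpos: "?mu n > 0" and nB: "x \<notin> Bs X M n" and n2: "n \<ge> 2" using elim by auto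
        obtain k where k: "k > 0" "real k \<le> real n ^ 2 / ?mu n" "\<forall>i<n. x (k + i) = x i"
          using Bs_point[OF assms(1-5) xX mpos nB] by blast
        show ?case by (rule rr_bound(2)[OF n2 b mpos k])
      qed
    qed
    ultimately show "limsup (return_rate \<beta> x) = 0" by simp
  qed
qed

end
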